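(* Let $X_1$ be a real random variable with cumulative distribution function $F$ and mean $\mu$, let $p\geq1$ and suppose $\nu_p:=(\mathbb{E}|X_1-\mu|^p)^{1/p}<+\infty$. For $\xi>0$ define \[\rho_{F,p}(\xi):=\sup\left\{\frac{(\mathbb{E}[|X_1-\mu|^pZ])^{1/p}}{\nu_p}:\ Z \text{ a random variable with }0\leq Z\leq1,\ \mathbb{E}Z\leq\xi\right\}\] when $\nu_p>0$, and $\rho_{F,p}(\xi)=0$ otherwise (the supremum is over random variables $Z$ defined jointly with $X_1$). Then $0\leq\rho_{F,p}\leq1$, $\lim_{\xi\to0}\rho_{F,p}(\xi)=0$, and \[\forall r>0:\quad \Pr(|X_1-\mu|>r\nu_p)\leq\frac{\rho_{F,p}(r^{-p})^p}{r^p}.\] Finally, if $\nu_q\leq\kappa_{p,q}\nu_p<+\infty$ for some $q>p$ (with $\nu_q:=(\mathbb{E}|X_1-\mu|^q)^{1/q}$), then $\rho_{F,p}(\xi)\leq\kappa_{p,q}\,\xi^{\frac1p-\frac1q}$. *)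

theory Defs
  imports "HOL-Probability.Probability"
begin

definition nu_law :: "real measure \<Rightarrow> real \<Rightarrow> real \<Rightarrow> real" where
  "nu_law F mu p = (\<integral>x. \<bar>x - mu\<bar> powr p \<partial>F) powr (1 / p)"

text \<open>Couplings of X with a random variable Z: joint laws J of (X, Z) on the plane,
  whose first marginal is the law F of X.\<close>
definition admissible_coupling :: "real measure \<Rightarrow> real \<Rightarrow> (real \<times> real) measure \<Rightarrow> bool" where
  "admissible_coupling F xi J \<longleftrightarrow>
     prob_space J \<and> sets J = sets (borel \<Otimes>\<^sub>M borel) \<and> distr J borel fst = F \<and>
     (AE w in J. 0 \<le> snd w \<and> snd w \<le> 1) \<and> (\<integral>w. snd w \<partial>J) \<le> xi"

definition rho_Fp :: "real measure \<Rightarrow> real \<Rightarrow> real \<Rightarrow> real \<Rightarrow> real" where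
  "rho_Fp F mu p xi =
     (if nu_law F mu p > 0 then
        Sup {(\<integral>w. \<bar>fst w - mu\<bar> powr p * snd w \<partial>J) powr (1 / p) / nu_law F mu p
             | J. admissible_coupling F xi J}
      else 0)"

end

theory Submission
  imports Defs
begin

lemma fst_pull:
  fixes J :: "(real \<times> real) measure" and f :: "real \<Rightarrow> real"
  assumes "sets J = sets (borel \<Otimes>\<^sub>M borel)" "distr J borel fst = F"
    "f \<in> borel_measurable borel" "integrable F f"
  shows "integrable J (\<lambda>w. f (fst w))" "(\<integral>w. f (fst w) \<partial>J) = (\<integral>x. f x \<partial>F)"
proof -
  have m: "fst \<in> measurable J borel"
    using measurable_cong_sets[OF assms(1) refl] measurable_fst by blast
  show "integrable J (\<lambda>w. f (fst w))"
    using integrable_distr_eq[OF m assms(3)] assms(2,4) by simp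
  show "(\<integral>w. f (fst w) \<partial>J) = (\<integral>x. f x \<partial>F)"
    using integral_distr[OF m assms(3)] assms(2) by simp
qed

lemma adm_basic:
  fixes F :: "real measure" and mu p :: real
  assumes adm: "admissible_coupling F xi J" and p: "p > 0"
    and int: "integrable F (\<lambda>x. \<bar>x - mu\<bar> powr p)"
  shows "integrable J (\<lambda>w. \<bar>fst w - mu\<bar> powr p * snd w)"
    "0 \<le> (\<integral>w. \<bar>fst w - mu\<bar> powr p * snd w \<partial>J)"
    "(\<integral>w. \<bar>fst w - mu\<bar> powr p * snd w \<partial>J) \<le> (\<integral>x. \<bar>x - mu\<bar> powr p \<partial>F)"
    "integrable J snd" "(\<integral>w. snd w \<partial>J) \<le> xi"
    "AE w in J. 0 \<le> snd w \<and> snd w \<le> 1" "prob_space J"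
    "sets J = sets (borel \<Otimes>\<^sub>M borel)" "distr J borel fst = F"
proof -
  from adm show J: "prob_space J" "sets J = sets (borel \<Otimes>\<^sub>M borel)" "distr J borel fst = F"
    "AE w in J. 0 \<le> snd w \<and> snd w \<le> 1" "(\<integral>w. snd w \<partial>J) \<le> xi"
    unfolding admissible_coupling_def by auto
  have ia: "integrable J (\<lambda>w. \<bar>fst w - mu\<bar> powr p)"
    and ea: "(\<integral>w. \<bar>fst w - mu\<bar> powr p \<partial>J) = (\<integral>x. \<bar>x - mu\<bar> powr p \<partial>F)"
    using fst_pull[OF J(2,3) _ int] by auto
  have msnd[measurable]: "snd \<in> borel_measurable J"
    using measurable_cong_sets[OF J(2) refl] measurable_snd by blast
  have mfst[measurable]: "fst \<in> borel_measurable J"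
    using measurable_cong_sets[OF J(2) refl] measurable_fst by blast
  have mh: "(\<lambda>w. \<bar>fst w - mu\<bar> powr p * snd w) \<in> borel_measurable J" by measurable
  have bd: "AE w in J. norm (\<bar>fst w - mu\<bar> powr p * snd w) \<le> norm (\<bar>fst w - mu\<bar> powr p)"
    using J(4) by eventually_elim (auto simp: abs_mult intro: mult_left_le)
  show ih: "integrable J (\<lambda>w. \<bar>fst w - mu\<bar> powr p * snd w)"
    by (rule Bochner_Integration.integrable_bound[OF ia mh bd])
  interpret J: prob_space J by (rule J(1))
  have "integrable J (\<lambda>_. 1::real)" by simp
  moreover have "AE w in J. norm (snd w) \<le> norm (1::real)"
    using J(4) by eventually_elim auto
  ultimately show "integrable J snd" using Bochner_Integration.integrable_bound msnd by blast
  show "0 \<le> (\<integral>w. \<bar>fst w - mu\<bar> powr p * snd w \<partial>J)"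
    using J(4) by (intro integral_nonneg_AE) (auto elim: eventually_mono)
  have "(\<integral>w. \<bar>fst w - mu\<bar> powr p * snd w \<partial>J) \<le> (\<integral>w. \<bar>fst w - mu\<bar> powr p \<partial>J)"
  proof (intro integral_mono_AE ih ia)
    show "AE w in J. \<bar>fst w - mu\<bar> powr p * snd w \<le> \<bar>fst w - mu\<bar> powr p"
      using J(4) by eventually_elim (auto intro: mult_left_le)
  qed
  then show "(\<integral>w. \<bar>fst w - mu\<bar> powr p * snd w \<partial>J) \<le> (\<integral>x. \<bar>x - mu\<bar> powr p \<partial>F)"
    using ea by simp
qed

lemma coupling_from:
  fixes M :: "'a measure" and X Z :: "'a \<Rightarrow> real"
  assumes "prob_space M" "X \<in> borel_measurable M" "Z \<in> borel_measurable M"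
    "\<And>\<omega>. \<omega> \<in> space M \<Longrightarrow> 0 \<le> Z \<omega> \<and> Z \<omega> \<le> 1" "(\<integral>\<omega>. Z \<omega> \<partial>M) \<le> xi"
  shows "admissible_coupling (distr M borel X) xi (distr M (borel \<Otimes>\<^sub>M borel) (\<lambda>\<omega>. (X \<omega>, Z \<omega>)))"
    "(\<integral>w. \<bar>fst w - mu\<bar> powr p * snd w \<partial>(distr M (borel \<Otimes>\<^sub>M borel) (\<lambda>\<omega>. (X \<omega>, Z \<omega>))))
      = (\<integral>\<omega>. \<bar>X \<omega> - mu\<bar> powr p * Z \<omega> \<partial>M)"
proof -
  have m[measurable]: "(\<lambda>\<omega>. (X \<omega>, Z \<omega>)) \<in> measurable M (borel \<Otimes>\<^sub>M borel)"
    using assms(2,3) by measurable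
  have ps: "prob_space (distr M (borel \<Otimes>\<^sub>M borel) (\<lambda>\<omega>. (X \<omega>, Z \<omega>)))"
    by (rule prob_space.prob_space_distr[OF assms(1) m])
  have dd: "distr (distr M (borel \<Otimes>\<^sub>M borel) (\<lambda>\<omega>. (X \<omega>, Z \<omega>))) borel fst = distr M borel X"
    by (subst distr_distr) (auto simp: comp_def)
  have ae: "AE w in distr M (borel \<Otimes>\<^sub>M borel) (\<lambda>\<omega>. (X \<omega>, Z \<omega>)). 0 \<le> snd w \<and> snd w \<le> 1"
    using assms(4) by (subst AE_distr_iff[OF m]) (auto intro!: AE_I2)
  have isnd: "(\<integral>w. snd w \<partial>(distr M (borel \<Otimes>\<^sub>M borel) (\<lambda>\<omega>. (X \<omega>, Z \<omega>)))) = (\<integral>\<omega>. Z \<omega> \<partial>M)"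
    by (subst integral_distr[OF m]) auto
  show "admissible_coupling (distr M borel X) xi (distr M (borel \<Otimes>\<^sub>M borel) (\<lambda>\<omega>. (X \<omega>, Z \<omega>)))"
    unfolding admissible_coupling_def using ps dd ae isnd assms(5) by auto
  show "(\<integral>w. \<bar>fst w - mu\<bar> powr p * snd w \<partial>(distr M (borel \<Otimes>\<^sub>M borel) (\<lambda>\<omega>. (X \<omega>, Z \<omega>))))
      = (\<integral>\<omega>. \<bar>X \<omega> - mu\<bar> powr p * Z \<omega> \<partial>M)"
    by (subst integral_distr[OF m]) auto
qed

lemma young_pt:
  fixes a z t p q :: real
  assumes "a \<ge> 0" "0 \<le> z" "z \<le> 1" "t > 0" "0 < p" "p < q"
  shows "a * z \<le> t powr (q/p) * a powr (q/p) / (q/p) + t powr (- (q/(q-p))) * z / (q/(q-p))"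
proof -
  have s: "q/p > 1" using assms by simp
  have s': "q/(q-p) > 1" using assms by (simp add: field_simps)
  have e: "1/(q/p) + 1/(q/(q-p)) = 1" using assms by (simp add: field_simps)
  have "a * z = (t*a) * (z/t)" using assms by simp
  also have "\<dots> \<le> (t*a) powr (q/p) / (q/p) + (z/t) powr (q/(q-p)) / (q/(q-p))"
    by (rule Youngs_inequality[OF s s' e]) (use assms in auto)
  also have "(t*a) powr (q/p) = t powr (q/p) * a powr (q/p)"
    using assms by (simp add: powr_mult)
  also have "(z/t) powr (q/(q-p)) = z powr (q/(q-p)) * t powr (- (q/(q-p)))"
  proof -
    have "(z/t) powr (q/(q-p)) = z powr (q/(q-p)) / t powr (q/(q-p))"
      using assms by (simp add: powr_divide)
    also have "\<dots> = z powr (q/(q-p)) * t powr (- (q/(q-p)))"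
      by (simp add: powr_minus divide_inverse)
    finally show ?thesis .
  qed
  also have "z powr (q/(q-p)) \<le> z"
  proof (cases "z = 0")
    case False
    then have "z powr (q/(q-p)) \<le> z powr 1"
      using assms s' by (intro powr_mono') auto
    then show ?thesis using assms by simp
  qed simp
  then have "z powr (q/(q-p)) * t powr (- (q/(q-p))) / (q/(q-p)) \<le> t powr (- (q/(q-p))) * z / (q/(q-p))"
    using s' assms by (intro divide_right_mono mult_left_mono) auto
  finally show ?thesis by simp
qed


lemma main_aux:
  fixes M :: "'a measure" and X :: "'a \<Rightarrow> real" and p mu :: real and F :: "real measure"
  assumes PM: "prob_space M" and mX[measurable]: "X \<in> borel_measurable M"
    and p1: "p \<ge> 1"
    and intP: "integrable M (\<lambda>\<omega>. \<bar>X \<omega> - mu\<bar> powr p)"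
    and Fdef: "F = distr M borel X"
  shows "(\<forall>xi>0. 0 \<le> rho_Fp F mu p xi \<and> rho_Fp F mu p xi \<le> 1)
       \<and> (rho_Fp F mu p \<longlongrightarrow> 0) (at_right 0)
       \<and> (\<forall>r>0. measure M {\<omega> \<in> space M. \<bar>X \<omega> - mu\<bar>
                  > r * (\<integral>\<omega>. \<bar>X \<omega> - mu\<bar> powr p \<partial>M) powr (1 / p)}
              \<le> rho_Fp F mu p (r powr (- p)) powr p / r powr p)
       \<and> (\<forall>q kappa. q > p \<and> kappa \<ge> 0
            \<and> integrable M (\<lambda>\<omega>. \<bar>X \<omega> - mu\<bar> powr q)
            \<and> (\<integral>\<omega>. \<bar>X \<omega> - mu\<bar> powr q \<partial>M) powr (1 / q)
                \<le> kappa * (\<integral>\<omega>. \<bar>X \<omega> - mu\<bar> powr p \<partial>M) powr (1 / p)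
            \<longrightarrow> (\<forall>xi>0. rho_Fp F mu p xi \<le> kappa * xi powr (1 / p - 1 / q)))"
proof -
  interpret prob_space M by (rule PM)
  have p0: "p > 0" using p1 by simp
  define P where "P = (\<integral>\<omega>. \<bar>X \<omega> - mu\<bar> powr p \<partial>M)"
  have mg[measurable]: "(\<lambda>x::real. \<bar>x - mu\<bar> powr p) \<in> borel_measurable borel" by measurable
  have intF: "integrable F (\<lambda>x. \<bar>x - mu\<bar> powr p)"
    using integrable_distr_eq[OF mX mg] intP Fdef by simp
  have PF: "(\<integral>x. \<bar>x - mu\<bar> powr p \<partial>F) = P"
    using integral_distr[OF mX mg] Fdef P_def by simp
  have P0: "P \<ge> 0" unfolding P_def by (intro integral_nonneg_AE) auto
  define nu where "nu = nu_law F mu p"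
  have nu_eq: "nu = P powr (1/p)" unfolding nu_def nu_law_def PF ..
  have nu0: "nu \<ge> 0" unfolding nu_eq by simp
  have nuP: "nu powr p = P" unfolding nu_eq using P0 p0 by (simp add: powr_powr)
  define v where "v = (\<lambda>J. (\<integral>w. \<bar>fst w - mu\<bar> powr p * snd w \<partial>J) powr (1/p) / nu)"
  have rho_eq: "\<And>xi. rho_Fp F mu p xi = (if nu > 0 then Sup {v J | J. admissible_coupling F xi J} else 0)"
    unfolding rho_Fp_def nu_def v_def by simp
  have vbd: "0 \<le> v J \<and> v J \<le> 1" if "nu > 0" "admissible_coupling F xi J" for xi J
  proof -
    note b = adm_basic[OF that(2) p0 intF]
    have "v J \<le> P powr (1/p) / nu"
      unfolding v_def using b(2,3) PF that(1) p0
      by (intro divide_right_mono powr_mono2) auto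
    also have "\<dots> = 1" using that(1) nu_eq by simp
    finally show ?thesis unfolding v_def using that(1) by simp
  qed
  have ex: "\<exists>J. admissible_coupling F xi J" if "xi \<ge> 0" for xi
    using coupling_from(1)[OF PM mX, of "\<lambda>_. 0" xi] Fdef that by auto
  have upper: "v J \<le> rho_Fp F mu p xi" if "nu > 0" "admissible_coupling F xi J" for xi J
  proof -
    have "bdd_above {v J | J. admissible_coupling F xi J}"
      using vbd[OF that(1)] by (intro bdd_aboveI[of _ 1]) auto
    then show ?thesis unfolding rho_eq using that by (auto intro!: cSup_upper)
  qed
  have least: "rho_Fp F mu p xi \<le> C powr (1/p) / nu"
    if "nu > 0" "xi \<ge> 0" "\<And>J. admissible_coupling F xi J \<Longrightarrow> (\<integral>w. \<bar>fst w - mu\<bar> powr p * snd w \<partial>J) \<le> C"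
    for xi C
  proof -
    have "v J \<le> C powr (1/p) / nu" if "admissible_coupling F xi J" for J
      unfolding v_def using adm_basic(2)[OF that p0 intF] \<open>nu > 0\<close> \<open>xi \<ge> 0\<close> p0
        \<open>\<And>J. admissible_coupling F xi J \<Longrightarrow> _ \<le> C\<close>[OF that]
      by (intro divide_right_mono powr_mono2) auto
    then show ?thesis unfolding rho_eq using that(1) ex[OF that(2)]
      by (auto intro!: cSup_least)
  qed
  have rho_nonneg: "0 \<le> rho_Fp F mu p xi" if xi0: "xi \<ge> 0" for xi
  proof (cases "nu > 0")
    case True
    obtain J where "admissible_coupling F xi J" using ex[OF xi0] by blast
    then show ?thesis using vbd[OF True] upper[OF True] by force
  qed (simp add: rho_eq)
  have rho_le1: "rho_Fp F mu p xi \<le> 1" if "xi \<ge> 0" for xi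
  proof (cases "nu > 0")
    case True
    have "rho_Fp F mu p xi \<le> P powr (1/p) / nu"
      using adm_basic(3)[OF _ p0 intF] PF by (intro least[OF True that]) auto
    then show ?thesis using True nu_eq by simp
  qed (simp add: rho_eq)
  have c1: "\<forall>xi>0. 0 \<le> rho_Fp F mu p xi \<and> rho_Fp F mu p xi \<le> 1"
    using rho_nonneg rho_le1 by simp
  have c2: "(rho_Fp F mu p \<longlongrightarrow> 0) (at_right 0)"
  proof (cases "nu > 0")
    case False
    then have "rho_Fp F mu p = (\<lambda>_. 0)" by (auto simp: rho_eq)
    then show ?thesis by simp
  next
    case nupos: True
    define g where "g = (\<lambda>\<omega>. \<bar>X \<omega> - mu\<bar> powr p)"
    define T where "T = (\<lambda>t. \<integral>\<omega>. (if g \<omega> > t then g \<omega> else 0) \<partial>M)"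
    have mgM[measurable]: "g \<in> borel_measurable M" unfolding g_def by measurable
    have Tlim: "(T \<longlongrightarrow> 0) at_top"
    proof -
      have "((\<lambda>t. integral\<^sup>L M (\<lambda>\<omega>. if g \<omega> > t then g \<omega> else 0)) \<longlongrightarrow> integral\<^sup>L M (\<lambda>_. 0::real)) at_top"
      proof (rule integral_dominated_convergence_at_top[where w=g])
        show "(\<lambda>_. 0::real) \<in> borel_measurable M" by simp
        show "\<And>t. (\<lambda>\<omega>. if g \<omega> > t then g \<omega> else 0) \<in> borel_measurable M" by measurable
        show "integrable M g" unfolding g_def by (rule intP)
        show "AE x in M. ((\<lambda>i. if g x > i then g x else 0) \<longlongrightarrow> 0) at_top"
        proof (rule AE_I2)
          fix x
          have "eventually (\<lambda>i. (if g x > i then g x else 0) = 0) at_top"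
            using eventually_gt_at_top[of "g x"] by eventually_elim auto
          then show "((\<lambda>i. if g x > i then g x else 0) \<longlongrightarrow> 0) at_top"
            by (rule tendsto_eventually)
        qed
        show "\<forall>\<^sub>F i in at_top. AE x in M. norm (if g x > i then g x else 0) \<le> g x"
          by (auto simp: g_def)
      qed
      then show ?thesis unfolding T_def by simp
    qed
    have T0: "T t \<ge> 0" for t unfolding T_def by (intro integral_nonneg_AE) (auto simp: g_def)
    have boundK: "(\<integral>w. \<bar>fst w - mu\<bar> powr p * snd w \<partial>J) \<le> T K + K * xi"
      if adm: "admissible_coupling F xi J" and K0: "K \<ge> 0" for J K xi
    proof -
      note b = adm_basic[OF adm p0 intF]
      define f where "f = (\<lambda>x::real. if \<bar>x - mu\<bar> powr p > K then \<bar>x - mu\<bar> powr p else 0)"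
      have mf[measurable]: "f \<in> borel_measurable borel" unfolding f_def by measurable
      have ifM: "integrable M (\<lambda>\<omega>. f (X \<omega>))"
        by (rule Bochner_Integration.integrable_bound[OF intP]) (auto simp: f_def)
      have ifF: "integrable F f" using integrable_distr_eq[OF mX mf] ifM Fdef by simp
      have TF: "(\<integral>x. f x \<partial>F) = T K"
        using integral_distr[OF mX mf] Fdef unfolding T_def f_def g_def by simp
      have iJ: "integrable J (\<lambda>w. f (fst w))" and eJ: "(\<integral>w. f (fst w) \<partial>J) = T K"
        using fst_pull[OF b(8,9) mf ifF] TF by auto
      have "(\<integral>w. \<bar>fst w - mu\<bar> powr p * snd w \<partial>J) \<le> (\<integral>w. f (fst w) + K * snd w \<partial>J)"
      proof (intro integral_mono_AE b(1))
        show "integrable J (\<lambda>w. f (fst w) + K * snd w)" using iJ b(4) by simp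
        show "AE w in J. \<bar>fst w - mu\<bar> powr p * snd w \<le> f (fst w) + K * snd w"
          using b(6)
        proof eventually_elim
          case (elim w)
          show ?case
          proof (cases "\<bar>fst w - mu\<bar> powr p > K")
            case True
            then have "\<bar>fst w - mu\<bar> powr p * snd w \<le> \<bar>fst w - mu\<bar> powr p"
              using elim by (intro mult_left_le) auto
            moreover have "0 \<le> K * snd w" using elim K0 by simp
            ultimately show ?thesis using True unfolding f_def by simp
          next
            case False
            then have "\<bar>fst w - mu\<bar> powr p * snd w \<le> K * snd w"
              using elim by (intro mult_right_mono) auto
            then show ?thesis using False unfolding f_def by simp
          qed
        qed
      qed
      also have "\<dots> = T K + K * (\<integral>w. snd w \<partial>J)" using iJ b(4) eJ by simp
      also have "\<dots> \<le> T K + K * xi" using b(5) K0 by (intro add_left_mono mult_left_mono) auto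
      finally show ?thesis .
    qed
    show ?thesis
    proof (rule tendstoI)
      fix eps :: real assume eps: "eps > 0"
      define E where "E = (eps * nu) powr p"
      have E0: "E > 0" unfolding E_def using eps nupos by simp
      have "eventually (\<lambda>t. T t < E/2) at_top"
        using order_tendstoD(2)[OF Tlim, of "E/2"] E0 by simp
      then obtain N where N: "\<And>t. t \<ge> N \<Longrightarrow> T t < E/2"
        unfolding eventually_at_top_linorder by blast
      define K where "K = max N 1"
      have K1: "K \<ge> 1" unfolding K_def by simp
      have TK: "T K < E/2" using N unfolding K_def by simp
      show "eventually (\<lambda>xi. dist (rho_Fp F mu p xi) 0 < eps) (at_right 0)"
        unfolding eventually_at_right_field
      proof (intro exI[of _ "E / (2*K)"] conjI allI impI)
        show "0 < E / (2*K)" using E0 K1 by simp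
        fix xi :: real assume xi0: "0 < xi" and xib: "xi < E / (2*K)"
        have "rho_Fp F mu p xi \<le> (T K + K * xi) powr (1/p) / nu"
          using boundK K1 xi0 by (intro least[OF nupos]) auto
        also have "\<dots> < E powr (1/p) / nu"
        proof -
          have "K * xi < K * (E / (2*K))" using xib K1 by (intro mult_strict_left_mono) auto
          then have "K * xi < E/2" using K1 by simp
          then have "T K + K * xi < E" using TK by simp
          then have "(T K + K * xi) powr (1/p) < E powr (1/p)"
            using T0[of K] K1 xi0 p0 by (intro powr_less_mono2) auto
          then show ?thesis using nupos by (simp add: divide_strict_right_mono)
        qed
        also have "E powr (1/p) / nu = eps"
          unfolding E_def using eps nupos p0 by (simp add: powr_powr)
        finally show "dist (rho_Fp F mu p xi) 0 < eps"
          using rho_nonneg[of xi] xi0 by simp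
      qed
    qed
  qed
  have c3: "\<forall>r>0. measure M {\<omega> \<in> space M. \<bar>X \<omega> - mu\<bar>
                  > r * (\<integral>\<omega>. \<bar>X \<omega> - mu\<bar> powr p \<partial>M) powr (1 / p)}
              \<le> rho_Fp F mu p (r powr (- p)) powr p / r powr p"
  proof (intro allI impI)
    fix r :: real assume r0: "r > 0"
    define A where "A = {\<omega> \<in> space M. \<bar>X \<omega> - mu\<bar> > r * nu}"
    have Aeq: "{\<omega> \<in> space M. \<bar>X \<omega> - mu\<bar> > r * (\<integral>\<omega>. \<bar>X \<omega> - mu\<bar> powr p \<partial>M) powr (1 / p)} = A"
      unfolding A_def nu_eq P_def ..
    have A[measurable]: "A \<in> sets M" unfolding A_def by measurable
    show "measure M {\<omega> \<in> space M. \<bar>X \<omega> - mu\<bar> > r * (\<integral>\<omega>. \<bar>X \<omega> - mu\<bar> powr p \<partial>M) powr (1 / p)}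
              \<le> rho_Fp F mu p (r powr (- p)) powr p / r powr p"
    proof (cases "nu > 0")
      case False
      then have "nu = 0" using nu0 by simp
      then have "P = 0" using nu_eq P0 by simp
      then have "AE \<omega> in M. \<bar>X \<omega> - mu\<bar> powr p = 0"
        using integral_nonneg_eq_0_iff_AE[OF intP] unfolding P_def by auto
      then have "AE \<omega> in M. \<omega> \<notin> A"
        by eventually_elim (auto simp: A_def \<open>nu = 0\<close>)
      then have "emeasure M A = 0" using AE_iff_measurable[OF A, of "\<lambda>\<omega>. \<omega> \<notin> A"]
        using sets.sets_into_space[OF A] by auto
      then have "measure M A = 0" by (simp add: measure_def)
      then show ?thesis using Aeq by (simp add: rho_eq False)
    next
      case nupos: True
      define I where "I = (\<integral>\<omega>. \<bar>X \<omega> - mu\<bar> powr p * indicator A \<omega> \<partial>M)"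
      have iI: "integrable M (\<lambda>\<omega>. \<bar>X \<omega> - mu\<bar> powr p * indicator A \<omega>)"
        by (rule Bochner_Integration.integrable_bound[OF intP]) (auto simp: indicator_def)
      have IP: "I \<le> P" unfolding I_def P_def
        by (intro integral_mono iI intP) (auto simp: indicator_def)
      have I0: "I \<ge> 0" unfolding I_def by (intro integral_nonneg_AE) auto
      have low: "(r * nu) powr p * measure M A \<le> I"
      proof -
        have "(r * nu) powr p * measure M A = (\<integral>\<omega>. (r * nu) powr p * indicator A \<omega> \<partial>M)"
          using A by simp
        also have "\<dots> \<le> I" unfolding I_def
        proof (intro integral_mono iI)
          have "integrable M (indicator A :: 'a \<Rightarrow> real)"
            using A by (intro integrable_real_indicator) (auto simp: less_top[symmetric])
          then show "integrable M (\<lambda>\<omega>. (r * nu) powr p * indicator A \<omega>)" by simp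
          show "(r * nu) powr p * indicator A \<omega> \<le> \<bar>X \<omega> - mu\<bar> powr p * indicator A \<omega>" for \<omega>
            using r0 nupos p0 by (auto simp: indicator_def A_def intro!: powr_mono2)
        qed
        finally show ?thesis .
      qed
      have Ppos: "P > 0" using nupos nu_eq P0 by (cases "P = 0") auto
      have rnu: "(r * nu) powr p = r powr p * P" using r0 nu0 nuP by (simp add: powr_mult)
      have mA: "measure M A \<le> r powr (- p)"
      proof -
        have "r powr p * P * measure M A \<le> P" using low IP rnu by simp
        then have "(r powr p * measure M A) * P \<le> 1 * P" by (simp add: ac_simps)
        then have "r powr p * measure M A \<le> 1" using Ppos by (rule mult_right_le_imp_le)
        then show ?thesis using r0 by (simp add: powr_minus field_simps)
      qed
      define J where "J = distr M (borel \<Otimes>\<^sub>M borel) (\<lambda>\<omega>. (X \<omega>, indicator A \<omega> :: real))"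
      have mZ: "(indicator A :: 'a \<Rightarrow> real) \<in> borel_measurable M" by measurable
      have EZ: "(\<integral>\<omega>. (indicator A \<omega> :: real) \<partial>M) \<le> r powr (- p)"
        using mA A by (simp add: Int_absorb2 sets.sets_into_space)
      have Zb: "\<And>\<omega>. \<omega> \<in> space M \<Longrightarrow> 0 \<le> (indicator A \<omega> :: real) \<and> (indicator A \<omega> :: real) \<le> 1"
        by (simp add: indicator_def)
      have adm: "admissible_coupling F (r powr (- p)) J"
        using coupling_from(1)[OF PM mX mZ Zb EZ] Fdef unfolding J_def by simp
      have IJ: "(\<integral>w. \<bar>fst w - mu\<bar> powr p * snd w \<partial>J) = I"
        using coupling_from(2)[OF PM mX mZ Zb EZ, where mu=mu and p=p] unfolding J_def I_def by simp
      have vJ: "v J = I powr (1/p) / nu" unfolding v_def IJ ..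
      have vJ0: "0 \<le> v J" using vbd[OF nupos adm] by simp
      have vp: "v J powr p = I / P"
        unfolding vJ using I0 nu0 p0 by (simp add: powr_divide powr_powr nuP)
      have h1: "r powr p * measure M A \<le> I / P"
      proof -
        have "(r powr p * measure M A) * P \<le> I" using low rnu by (simp add: ac_simps)
        then show ?thesis using Ppos by (simp add: le_divide_eq)
      qed
      have h2: "I / P \<le> rho_Fp F mu p (r powr (- p)) powr p"
      proof -
        have "v J powr p \<le> rho_Fp F mu p (r powr (- p)) powr p"
          using upper[OF nupos adm] vJ0 p0 by (intro powr_mono2) auto
        then show ?thesis using vp by simp
      qed
      have "r powr p * measure M A \<le> rho_Fp F mu p (r powr (- p)) powr p" using h1 h2 by linarith
      then have "measure M A \<le> rho_Fp F mu p (r powr (- p)) powr p / r powr p"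
        using r0 by (simp add: le_divide_eq mult.commute)
      then show ?thesis using Aeq by simp
    qed
  qed
  have c4: "\<forall>q kappa. q > p \<and> kappa \<ge> 0
            \<and> integrable M (\<lambda>\<omega>. \<bar>X \<omega> - mu\<bar> powr q)
            \<and> (\<integral>\<omega>. \<bar>X \<omega> - mu\<bar> powr q \<partial>M) powr (1 / q)
                \<le> kappa * (\<integral>\<omega>. \<bar>X \<omega> - mu\<bar> powr p \<partial>M) powr (1 / p)
            \<longrightarrow> (\<forall>xi>0. rho_Fp F mu p xi \<le> kappa * xi powr (1 / p - 1 / q))"
  proof (intro allI impI)
    fix q kappa xi :: real
    assume H: "q > p \<and> kappa \<ge> 0
            \<and> integrable M (\<lambda>\<omega>. \<bar>X \<omega> - mu\<bar> powr q)
            \<and> (\<integral>\<omega>. \<bar>X \<omega> - mu\<bar> powr q \<partial>M) powr (1 / q)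
                \<le> kappa * (\<integral>\<omega>. \<bar>X \<omega> - mu\<bar> powr p \<partial>M) powr (1 / p)"
      and xi0: "xi > 0"
    then have qp: "q > p" and k0: "kappa \<ge> 0" and intQ: "integrable M (\<lambda>\<omega>. \<bar>X \<omega> - mu\<bar> powr q)"
      and hyp: "(\<integral>\<omega>. \<bar>X \<omega> - mu\<bar> powr q \<partial>M) powr (1 / q) \<le> kappa * nu"
      using nu_eq P_def by auto
    have q0: "q > 0" using qp p0 by simp
    show "rho_Fp F mu p xi \<le> kappa * xi powr (1 / p - 1 / q)"
    proof (cases "nu > 0")
      case False
      then show ?thesis using k0 by (simp add: rho_eq)
    next
      case nupos: True
      define Q where "Q = (\<integral>\<omega>. \<bar>X \<omega> - mu\<bar> powr q \<partial>M)"
      have Q0: "Q \<ge> 0" unfolding Q_def by (intro integral_nonneg_AE) auto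
      have Qpos: "Q > 0"
      proof (rule ccontr)
        assume "\<not> Q > 0"
        then have "Q = 0" using Q0 by simp
        then have "AE \<omega> in M. \<bar>X \<omega> - mu\<bar> powr q = 0"
          using integral_nonneg_eq_0_iff_AE[OF intQ] unfolding Q_def by auto
        then have "AE \<omega> in M. \<bar>X \<omega> - mu\<bar> powr p = 0"
          by eventually_elim simp
        then have "P = 0" unfolding P_def by (rule integral_eq_zero_AE)
        then show False using nupos nu_eq by simp
      qed
      have mgq[measurable]: "(\<lambda>x::real. \<bar>x - mu\<bar> powr q) \<in> borel_measurable borel" by measurable
      have intFq: "integrable F (\<lambda>x. \<bar>x - mu\<bar> powr q)"
        using integrable_distr_eq[OF mX mgq] intQ Fdef by simp
      have QF: "(\<integral>x. \<bar>x - mu\<bar> powr q \<partial>F) = Q"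
        using integral_distr[OF mX mgq] Fdef Q_def by simp
      define e where "e = p * (q - p) / q^2"
      define t where "t = xi powr e * Q powr (- e)"
      have t0: "t > 0" unfolding t_def using xi0 Qpos by simp
      define s where "s = q / p"
      define s' where "s' = q / (q - p)"
      have ts: "t powr s = xi powr ((q-p)/q) * Q powr (- ((q-p)/q))"
      proof -
        have "e * s = (q-p)/q" unfolding e_def s_def using p0 q0 by (simp add: power2_eq_square field_simps)
        moreover have "t powr s = xi powr (e * s) * Q powr (- (e * s))"
          unfolding t_def using xi0 Qpos by (simp add: powr_mult powr_powr)
        ultimately show ?thesis by simp
      qed
      have ts': "t powr (- s') = xi powr (- (p/q)) * Q powr (p/q)"
      proof -
        have "e * s' = p/q" unfolding e_def s'_def using p0 q0 qp by (simp add: power2_eq_square field_simps)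
        moreover have "t powr (- s') = xi powr (- (e * s')) * Q powr (e * s')"
          unfolding t_def using xi0 Qpos by (simp add: powr_mult powr_powr)
        ultimately show ?thesis by simp
      qed
      have bound: "(\<integral>w. \<bar>fst w - mu\<bar> powr p * snd w \<partial>J) \<le> xi powr ((q-p)/q) * Q powr (p/q)"
        if adm: "admissible_coupling F xi J" for J
      proof -
        note b = adm_basic[OF adm p0 intF]
        have iq: "integrable J (\<lambda>w. \<bar>fst w - mu\<bar> powr q)"
          and eq: "(\<integral>w. \<bar>fst w - mu\<bar> powr q \<partial>J) = Q"
          using fst_pull[OF b(8,9) mgq intFq] QF by auto
        have pw: "AE w in J. \<bar>fst w - mu\<bar> powr p * snd w
            \<le> t powr s / s * \<bar>fst w - mu\<bar> powr q + t powr (- s') / s' * snd w"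
          using b(6)
        proof eventually_elim
          case (elim w)
          have "\<bar>fst w - mu\<bar> powr p * snd w
             \<le> t powr (q/p) * (\<bar>fst w - mu\<bar> powr p) powr (q/p) / (q/p)
               + t powr (- (q/(q-p))) * snd w / (q/(q-p))"
            using elim t0 p0 qp by (intro young_pt) auto
          also have "(\<bar>fst w - mu\<bar> powr p) powr (q/p) = \<bar>fst w - mu\<bar> powr q"
            using p0 by (simp add: powr_powr)
          finally show ?case unfolding s_def s'_def by (simp add: field_simps)
        qed
        have "(\<integral>w. \<bar>fst w - mu\<bar> powr p * snd w \<partial>J)
            \<le> (\<integral>w. t powr s / s * \<bar>fst w - mu\<bar> powr q + t powr (- s') / s' * snd w \<partial>J)"
          using pw b(1,4) iq by (intro integral_mono_AE) auto
        also have "\<dots> = t powr s / s * Q + t powr (- s') / s' * (\<integral>w. snd w \<partial>J)"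
          using b(4) iq eq by simp
        also have "\<dots> \<le> t powr s / s * Q + t powr (- s') / s' * xi"
          using b(5) qp p0 unfolding s'_def by (intro add_left_mono mult_left_mono) auto
        also have "\<dots> = xi powr ((q-p)/q) * Q powr (p/q)"
        proof -
          have a1: "Q powr (- ((q-p)/q)) * Q = Q powr (p/q)"
          proof -
            have "Q powr (- ((q-p)/q)) * Q = Q powr (- ((q-p)/q) + 1)" using Qpos powr_add[of Q "- ((q-p)/q)" 1] by simp
            also have "- ((q-p)/q) + 1 = p/q" using q0 by (simp add: field_simps)
            finally show ?thesis .
          qed
          have a2: "xi powr (- (p/q)) * xi = xi powr ((q-p)/q)"
          proof -
            have "xi powr (- (p/q)) * xi = xi powr (- (p/q) + 1)" using xi0 powr_add[of xi "- (p/q)" 1] by simp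
            also have "- (p/q) + 1 = (q-p)/q" using q0 by (simp add: field_simps)
            finally show ?thesis .
          qed
          have "t powr s / s * Q + t powr (- s') / s' * xi
              = (xi powr ((q-p)/q) * Q powr (p/q)) * (1/s + 1/s')"
          proof -
            have "t powr s / s * Q = xi powr ((q-p)/q) * Q powr (p/q) / s"
              unfolding ts a1[symmetric] by (simp add: ac_simps)
            moreover have "t powr (- s') / s' * xi = xi powr ((q-p)/q) * Q powr (p/q) / s'"
              unfolding ts' a2[symmetric] by (simp add: ac_simps)
            ultimately show ?thesis by (simp only: distrib_left) simp
          qed
          also have "1/s + 1/s' = 1" unfolding s_def s'_def using p0 qp by (simp add: field_simps)
          finally show ?thesis by simp
        qed
        finally show ?thesis .
      qed
      have "rho_Fp F mu p xi \<le> (xi powr ((q-p)/q) * Q powr (p/q)) powr (1/p) / nu"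
        using bound xi0 by (intro least[OF nupos]) auto
      also have "(xi powr ((q-p)/q) * Q powr (p/q)) powr (1/p) = xi powr (1/p - 1/q) * Q powr (1/q)"
        using xi0 Qpos p0 q0 by (simp add: powr_mult powr_powr field_simps)
      also have "xi powr (1/p - 1/q) * Q powr (1/q) / nu \<le> xi powr (1/p - 1/q) * (kappa * nu) / nu"
        using hyp nupos unfolding Q_def by (intro divide_right_mono mult_left_mono) auto
      also have "\<dots> = kappa * xi powr (1 / p - 1 / q)" using nupos by simp
      finally show ?thesis .
    qed
  qed
  show ?thesis using c1 c2 c3 c4 by blast
qed


theorem proposition2p1:
  fixes M :: "'a measure" and X :: "'a \<Rightarrow> real" and p :: real
  assumes "prob_space M"
    and "X \<in> borel_measurable M"
    and "integrable M X"
    and "p \<ge> 1"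
    and "integrable M (\<lambda>\<omega>. \<bar>X \<omega> - (\<integral>\<omega>. X \<omega> \<partial>M)\<bar> powr p)"
  shows "(\<forall>xi>0. 0 \<le> rho_Fp (distr M borel X) (\<integral>\<omega>. X \<omega> \<partial>M) p xi
                  \<and> rho_Fp (distr M borel X) (\<integral>\<omega>. X \<omega> \<partial>M) p xi \<le> 1)
       \<and> (rho_Fp (distr M borel X) (\<integral>\<omega>. X \<omega> \<partial>M) p \<longlongrightarrow> 0) (at_right 0)
       \<and> (\<forall>r>0. measure M {\<omega> \<in> space M. \<bar>X \<omega> - (\<integral>\<omega>. X \<omega> \<partial>M)\<bar>
                  > r * (\<integral>\<omega>. \<bar>X \<omega> - (\<integral>\<omega>. X \<omega> \<partial>M)\<bar> powr p \<partial>M) powr (1 / p)}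
              \<le> rho_Fp (distr M borel X) (\<integral>\<omega>. X \<omega> \<partial>M) p (r powr (- p)) powr p / r powr p)
       \<and> (\<forall>q kappa. q > p \<and> kappa \<ge> 0
            \<and> integrable M (\<lambda>\<omega>. \<bar>X \<omega> - (\<integral>\<omega>. X \<omega> \<partial>M)\<bar> powr q)
            \<and> (\<integral>\<omega>. \<bar>X \<omega> - (\<integral>\<omega>. X \<omega> \<partial>M)\<bar> powr q \<partial>M) powr (1 / q)
                \<le> kappa * (\<integral>\<omega>. \<bar>X \<omega> - (\<integral>\<omega>. X \<omega> \<partial>M)\<bar> powr p \<partial>M) powr (1 / p)
            \<longrightarrow> (\<forall>xi>0. rho_Fp (distr M borel X) (\<integral>\<omega>. X \<omega> \<partial>M) p xi
                          \<le> kappa * xi powr (1 / p - 1 / q)))"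
    by (rule main_aux[OF assms(1,2,4,5) refl])

end
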